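(* For $\alpha\in\mathbb{C}$ and integers $m\geq1$, $r\geq1$, \[ \int_{[0,1]^r}\big[1-(1-\alpha)x_1\cdots x_r\big]^{m-1}dx_1\cdots dx_r=\sum_{m\geq m_1\geq\cdots\geq m_r\geq1}\frac{\alpha^{m_r-1}}{m\,m_1\cdots m_{r-1}}. \]
   Context: For $r=1$ the denominator on the right is just $m$. *)

theory Defs
  imports "HOL-Analysis.Analysis"
begin

end

theory Submission
  imports Defs
begin


definition T :: "complex \<Rightarrow> nat \<Rightarrow> nat \<Rightarrow> complex" where
  "T c r n = (\<Sum>k\<le>n. of_nat (n choose k) * c ^ k / of_nat (k+1) ^ r)"

lemma T_Suc: "T c (Suc r) n = (\<Sum>i\<le>n. T c r i) / of_nat (Suc n)"
proof -
  have "(\<Sum>i\<le>n. T c r i) = (\<Sum>i\<le>n. \<Sum>k\<le>n. of_nat (i choose k) * c ^ k / of_nat (k+1) ^ r)"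
    unfolding T_def
  proof (rule sum.cong[OF refl])
    fix i assume "i \<in> {..n}"
    then show "(\<Sum>k\<le>i. of_nat (i choose k) * c ^ k / of_nat (k+1) ^ r) = (\<Sum>k\<le>n. of_nat (i choose k) * c ^ k / of_nat (k+1) ^ r)"
      by (intro sum.mono_neutral_left) auto
  qed
  also have "\<dots> = (\<Sum>k\<le>n. \<Sum>i\<le>n. of_nat (i choose k) * c ^ k / of_nat (k+1) ^ r)"
    by (rule sum.swap)
  also have "\<dots> = (\<Sum>k\<le>n. of_nat (Suc n choose Suc k) * c ^ k / of_nat (k+1) ^ r)"
    by (simp add: sum_divide_distrib[symmetric] sum_distrib_right[symmetric] of_nat_sum[symmetric] sum_choose_upper)
  also have "\<dots> = (\<Sum>k\<le>n. of_nat (Suc n) * (of_nat (n choose k) * c ^ k / of_nat (k+1) ^ Suc r))"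
  proof (rule sum.cong[OF refl])
    fix k
    have e: "(of_nat (Suc n choose Suc k) :: complex) * of_nat (Suc k) = of_nat (Suc n) * of_nat (n choose k)"
      by (metis Suc_times_binomial_eq of_nat_mult)
    have "of_nat (Suc n choose Suc k) * c ^ k / of_nat (k+1) ^ r = (of_nat (Suc n choose Suc k) * of_nat (Suc k)) * c ^ k / of_nat (k+1) ^ Suc r"
      by (simp del: of_nat_Suc binomial_Suc_Suc)
    also have "\<dots> = of_nat (Suc n) * (of_nat (n choose k) * c ^ k / of_nat (k+1) ^ Suc r)"
      unfolding e by simp
    finally show "of_nat (Suc n choose Suc k) * c ^ k / of_nat (k+1) ^ r = of_nat (Suc n) * (of_nat (n choose k) * c ^ k / of_nat (k+1) ^ Suc r)" .
  qed
  finally have h: "(\<Sum>i\<le>n. T c r i) = of_nat (Suc n) * T c (Suc r) n"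
    unfolding T_def by (simp only: sum_distrib_left)
  then show ?thesis by (simp del: of_nat_Suc)
qed

lemma T_0: "T c 0 n = (1 + c) ^ n"
  proof -
  have "(c + 1) ^ n = (\<Sum>k\<le>n. of_nat (n choose k) * c ^ k * 1 ^ (n - k))"
    by (rule binomial_ring)
  then show ?thesis unfolding T_def by (simp add: add.commute)
qed



definition L :: "nat \<Rightarrow> nat \<Rightarrow> nat list set" where
  "L r m = {ms :: nat list. length ms = r \<and> sorted_wrt (\<ge>) ms \<and> set ms \<subseteq> {1..m}}"

definition R :: "complex \<Rightarrow> nat \<Rightarrow> nat \<Rightarrow> complex" where
  "R a r m = (\<Sum>ms \<in> L r m. a ^ (ms ! (r - 1) - 1) / (of_nat m * (\<Prod>i<r - 1. of_nat (ms ! i))))"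

lemma finite_L: "finite (L r m)"
proof -
  have "L r m \<subseteq> {xs. set xs \<subseteq> {1..m} \<and> length xs = r}" unfolding L_def by auto
  moreover have "finite {xs. set xs \<subseteq> {1..m} \<and> length xs = r}"
    by (rule finite_lists_length_eq) auto
  ultimately show ?thesis by (rule finite_subset)
qed

lemma L_Suc: "L (Suc r) (Suc n) = (\<lambda>(i,ms). Suc i # ms) ` (SIGMA i:{..n}. L r (Suc i))"
proof (intro set_eqI iffI)
  fix xs assume "xs \<in> L (Suc r) (Suc n)"
  then obtain x ms where xs: "xs = x # ms" and h: "length ms = r" "\<forall>y\<in>set ms. y \<le> x" "sorted_wrt (\<ge>) ms"
     "1 \<le> x" "x \<le> Suc n" "set ms \<subseteq> {1..Suc n}"
    unfolding L_def by (cases xs) auto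
  then obtain i where "x = Suc i" by (cases x) auto
  with h xs show "xs \<in> (\<lambda>(i,ms). Suc i # ms) ` (SIGMA i:{..n}. L r (Suc i))"
    unfolding L_def by (auto intro!: image_eqI[where x="(i, ms)"])
next
  fix xs assume "xs \<in> (\<lambda>(i,ms). Suc i # ms) ` (SIGMA i:{..n}. L r (Suc i))"
  then show "xs \<in> L (Suc r) (Suc n)" unfolding L_def by fastforce
qed

lemma R_1: "R a 1 (Suc n) = (\<Sum>i\<le>n. a ^ i) / of_nat (Suc n)"
proof -
  have "L 1 (Suc n) = (\<lambda>i. [Suc i]) ` {..n}"
  proof (intro set_eqI iffI)
    fix xs assume "xs \<in> L 1 (Suc n)"
    then obtain x where "xs = [x]" "1 \<le> x" "x \<le> Suc n" unfolding L_def
      by (auto simp: length_Suc_conv)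
    then show "xs \<in> (\<lambda>i. [Suc i]) ` {..n}" by (intro image_eqI[where x="x - 1"]) auto
  qed (auto simp: L_def)
  then have "R a 1 (Suc n) = (\<Sum>i\<le>n. a ^ i / of_nat (Suc n))"
    unfolding R_def \<open>L 1 (Suc n) = _\<close> by (subst sum.reindex) (auto simp: inj_on_def)
  then show ?thesis by (simp add: sum_divide_distrib)
qed

lemma R_Suc: "R a (Suc (Suc r)) (Suc n) = (\<Sum>i\<le>n. R a (Suc r) (Suc i)) / of_nat (Suc n)"
proof -
  have inj: "inj_on (\<lambda>(i,ms). Suc i # ms) (SIGMA i:{..n}. L (Suc r) (Suc i))"
    by (auto simp: inj_on_def)
  have "R a (Suc (Suc r)) (Suc n) = (\<Sum>(i,ms) \<in> (SIGMA i:{..n}. L (Suc r) (Suc i)).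
      a ^ ((Suc i # ms) ! Suc r - 1) / (of_nat (Suc n) * (\<Prod>j<Suc r. of_nat ((Suc i # ms) ! j))))"
    unfolding R_def L_Suc[of "Suc r" n] by (subst sum.reindex[OF inj]) (simp add: case_prod_unfold)
  also have "\<dots> = (\<Sum>i\<le>n. \<Sum>ms \<in> L (Suc r) (Suc i).
      a ^ (ms ! r - 1) / (of_nat (Suc i) * (\<Prod>j<r. of_nat (ms ! j))) / of_nat (Suc n))"
    by (subst sum.Sigma[symmetric]) (auto simp: finite_L prod.lessThan_Suc_shift field_simps simp del: of_nat_Suc prod.lessThan_Suc)
  also have "\<dots> = (\<Sum>i\<le>n. R a (Suc r) (Suc i)) / of_nat (Suc n)"
    unfolding R_def by (simp add: sum_divide_distrib)
  finally show ?thesis .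
qed



abbreviation U :: "real measure" where "U \<equiv> restrict_space lborel {0..1::real}"

lemma psf: "product_sigma_finite (\<lambda>_::nat. U)"
  unfolding product_sigma_finite_def
  by (auto intro!: sigma_finite_measure_restrict_space lborel.sigma_finite_measure_axioms)

lemma int_U: "integrable U (\<lambda>t. complex_of_real t ^ k)"
  by (subst integrable_restrict_space) (auto intro!: borel_integrable_compact continuous_intros)

lemma integral_U: "integral\<^sup>L U (\<lambda>t. complex_of_real t ^ k) = 1 / of_nat (Suc k)"
proof -
  have "integral\<^sup>L U (\<lambda>t. t ^ k) = (\<integral>x. x ^ k * indicator {0..1} x \<partial>lborel)"
    by (subst integral_restrict_space) (auto simp: mult.commute)
  also have "\<dots> = 1 ^ Suc k / Suc k - 0 ^ Suc k / Suc k"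
  proof (rule integral_FTC_Icc_real[where F="\<lambda>x. x ^ Suc k / Suc k"])
    fix x :: real
    have "((\<lambda>x. x ^ Suc k / Suc k) has_real_derivative (real (Suc k) * x ^ (Suc k - Suc 0) / Suc k)) (at x)"
      by (intro DERIV_cdivide DERIV_pow)
    moreover have "real (Suc k) * x ^ k / Suc k = x ^ k" by simp
    ultimately show "((\<lambda>x. x ^ Suc k / Suc k) has_real_derivative x ^ k) (at x)"
      by simp
  qed (auto intro!: continuous_intros)
  finally have "integral\<^sup>L U (\<lambda>t. t ^ k) = 1 / Suc k" by simp
  then have "integral\<^sup>L U (\<lambda>t. complex_of_real (t ^ k)) = 1 / of_nat (Suc k)"
    by (simp only: integral_complex_of_real) (simp del: of_nat_Suc)
  moreover have "(\<lambda>t. complex_of_real t ^ k) = (\<lambda>t. complex_of_real (t ^ k))" by simp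
  ultimately show ?thesis by (simp only:)
qed

lemma integral_prod_pow:
  "(LINT x | PiM {..<r} (\<lambda>_. U). (\<Prod>i<r. complex_of_real (x i) ^ k)) = 1 / of_nat (Suc k) ^ r"
  using product_sigma_finite.product_integral_prod[OF psf, of "{..<r}" "\<lambda>_ t. complex_of_real t ^ k"]
  by (simp add: int_U integral_U power_one_over del: of_nat_Suc)

lemma integrable_prod_pow:
  "integrable (PiM {..<r::nat} (\<lambda>_. U)) (\<lambda>x. \<Prod>i<r. complex_of_real (x i) ^ k)"
  using product_sigma_finite.product_integrable_prod[OF psf, of "{..<r}" "\<lambda>_ t. complex_of_real t ^ k"]
  by (simp add: int_U)


lemma integrand_expand:
  "(1 - (1 - a) * complex_of_real (\<Prod>i<r. x i)) ^ n
   = (\<Sum>k\<le>n. (of_nat (n choose k) * (a - 1) ^ k) * (\<Prod>i<r. complex_of_real (x i) ^ k))"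
proof -
  have "(1 - (1 - a) * complex_of_real (\<Prod>i<r. x i)) ^ n = ((a - 1) * complex_of_real (\<Prod>i<r. x i) + 1) ^ n"
    by (simp add: algebra_simps)
  also have "\<dots> = (\<Sum>k\<le>n. of_nat (n choose k) * ((a - 1) * complex_of_real (\<Prod>i<r. x i)) ^ k * 1 ^ (n - k))"
    by (rule binomial_ring)
  also have "\<dots> = (\<Sum>k\<le>n. (of_nat (n choose k) * (a - 1) ^ k) * (\<Prod>i<r. complex_of_real (x i) ^ k))"
    by (simp add: power_mult_distrib of_real_prod prod_power_distrib mult.assoc)
  finally show ?thesis .
qed

lemma integral_main:
  "(LINT x | PiM {..<r} (\<lambda>_. U). (1 - (1 - a) * complex_of_real (\<Prod>i<r. x i)) ^ n) = T (a - 1) r n"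
proof -
  have "(LINT x | PiM {..<r} (\<lambda>_. U). (1 - (1 - a) * complex_of_real (\<Prod>i<r. x i)) ^ n)
     = (LINT x | PiM {..<r} (\<lambda>_. U). (\<Sum>k\<le>n. (of_nat (n choose k) * (a - 1) ^ k) * (\<Prod>i<r. complex_of_real (x i) ^ k)))"
    by (simp only: integrand_expand)
  also have "\<dots> = (\<Sum>k\<le>n. LINT x | PiM {..<r} (\<lambda>_. U). (of_nat (n choose k) * (a - 1) ^ k) * (\<Prod>i<r. complex_of_real (x i) ^ k))"
    by (intro Bochner_Integration.integral_sum integrable_mult_right integrable_prod_pow)
  also have "\<dots> = (\<Sum>k\<le>n. (of_nat (n choose k) * (a - 1) ^ k) * (1 / of_nat (Suc k) ^ r))"
    by (simp only: integral_mult_right_zero integral_prod_pow)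
  also have "\<dots> = T (a - 1) r n"
    unfolding T_def by simp
  finally show ?thesis .
qed

lemma R_T: "r \<ge> 1 \<Longrightarrow> R a r (Suc n) = T (a - 1) r n"
proof (induction r arbitrary: n rule: nat_induct_at_least)
  case base
  have "T (a - 1) (Suc 0) n = (\<Sum>i\<le>n. T (a - 1) 0 i) / of_nat (Suc n)" by (rule T_Suc)
  then show ?case using R_1[of a n] by (simp add: T_0)
next
  case (Suc r)
  then obtain r' where r: "r = Suc r'" by (cases r) auto
  show ?case using Suc.IH unfolding r R_Suc T_Suc[of _ "Suc r'"] by simp
qed

theorem lemma2p1:
  fixes \<alpha> :: complex and m r :: nat
  assumes "m \<ge> 1" and "r \<ge> 1"
  shows "(LINT x | PiM {..<r} (\<lambda>_. restrict_space lborel {0..1::real}).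
            (1 - (1 - \<alpha>) * complex_of_real (\<Prod>i<r. x i)) ^ (m - 1))
       = (\<Sum>ms \<in> {ms :: nat list. length ms = r \<and> sorted_wrt (\<ge>) ms \<and> set ms \<subseteq> {1..m}}.
            \<alpha> ^ (ms ! (r - 1) - 1) / (of_nat m * (\<Prod>i<r - 1. of_nat (ms ! i))))"
proof -
  obtain n where m: "m = Suc n" using assms(1) by (cases m) auto
  have "R \<alpha> r (Suc n) = T (\<alpha> - 1) r n" using R_T assms(2) .
  then show ?thesis unfolding integral_main m R_def L_def by simp
qed

end
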